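(* Fix $p\in T^*\mathcal{Y}\setminus 0$. Let $\Sigma_p$ be the set of covectors $q\in T^*\mathcal{X}\setminus 0$ such that $(p,q)$ lies in the degenerate set $\Sigma$ of $\Lambda'$, and let $M_p=\{q\in T^*\mathcal{X}\setminus0: (p,q)\in\Lambda'\}$ be the set of mirror points associated to $p$. Then $M_p\setminus\Sigma_p$ consists of isolated covectors.
   Context: Setting (synthetic aperture radar model). $\gamma$ is a smooth embedded unit-speed curve in $\mathbb{R}^3$ (parameter $s$), $\Psi\subset\mathbb{R}^3$ a smooth embedded surface locally parametrized by $\psi(u,v)$, with $\mathrm{dist}(\Psi,\gamma)>0$; $c_0>0$ constant; $\mathcal{Y}=(s_1,s_2)\times(t_1,t_2)$, $\mathcal{X}=\{(u,v):\exists s\in(s_1,s_2),\ \tfrac{2}{c_0}|\psi(u,v)-\gamma(s)|\in(t_1,t_2)\}$. $R(u,v,s)=\psi(u,v)-\gamma(s)$, $\hat R=R/|R|$, and $\pi_{T\Psi}\hat R(u,v,s)$ is the projection of $\hat R$ onto the tangent plane of $\Psi$ at $\psi(u,v)$, written in components with respect to the coordinates $(u,v)$. Coordinates $(s,t,\sigma,\tau)$ on $T^*\mathcal{Y}$, $(u,v,\xi,\eta)$ on $T^*\mathcal{X}$. The canonical relation of the SAR forward operator is \[ \Lambda'=\Big\{(s,t,\sigma,\tau;u,v,\xi,\eta): t=\tfrac{2}{c_0}|R(u,v,s)|,\ \sigma=\tfrac{2\tau}{c_0}\hat R(u,v,s)\cdot\dot\gamma(s),\ (\xi,\eta)=\tfrac{2\tau}{c_0}\pi_{T\Psi}\hat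 R(u,v,s)\Big\}. \] Its degenerate set is $\Sigma=\Sigma_1\cup\Sigma_2$ with $\Sigma_1=\{\pi_{T\Psi}\hat R\parallel\nabla_{u,v}(\hat R\cdot\dot\gamma(s))\}\cap\Lambda'$ and $\Sigma_2=\{\pi_{T\Psi}\hat R\parallel\partial_s\pi_{T\Psi}\hat R\}\cap\Lambda'$; away from $\Sigma$, $\Lambda'$ is locally the graph of a diffeomorphism. *)

theory Defs
  imports "HOL-Analysis.Analysis"
begin

fun iter_dderiv :: "'a::real_normed_vector list \<Rightarrow> ('a \<Rightarrow> 'b::real_normed_vector) \<Rightarrow> 'a \<Rightarrow> 'b" where
  "iter_dderiv [] f = f"
| "iter_dderiv (w # ws) f = (\<lambda>x. frechet_derivative (iter_dderiv ws f) (at x) w)"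

definition smooth_on :: "'a::real_normed_vector set \<Rightarrow> ('a \<Rightarrow> 'b::real_normed_vector) \<Rightarrow> bool" where
  "smooth_on S f \<longleftrightarrow> open S \<and> (\<forall>ws. \<forall>x\<in>S. iter_dderiv ws f differentiable (at x))"

definition parallel2 :: "real \<times> real \<Rightarrow> real \<times> real \<Rightarrow> bool" where
  "parallel2 a b \<longleftrightarrow> (\<exists>\<alpha> \<beta>. (\<alpha>, \<beta>) \<noteq> (0, 0) \<and> \<alpha> *\<^sub>R a + \<beta> *\<^sub>R b = 0)"

definition Rvec :: "(real \<times> real \<Rightarrow> real^3) \<Rightarrow> (real \<Rightarrow> real^3) \<Rightarrow> real \<Rightarrow> real \<Rightarrow> real \<Rightarrow> real^3" where
  "Rvec \<psi> \<gamma> u v s = \<psi> (u, v) - \<gamma> s"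

definition Rhat :: "(real \<times> real \<Rightarrow> real^3) \<Rightarrow> (real \<Rightarrow> real^3) \<Rightarrow> real \<Rightarrow> real \<Rightarrow> real \<Rightarrow> real^3" where
  "Rhat \<psi> \<gamma> u v s = (1 / norm (Rvec \<psi> \<gamma> u v s)) *\<^sub>R Rvec \<psi> \<gamma> u v s"

definition psi_u :: "(real \<times> real \<Rightarrow> real^3) \<Rightarrow> real \<Rightarrow> real \<Rightarrow> real^3" where
  "psi_u \<psi> u v = frechet_derivative \<psi> (at (u, v)) (1, 0)"

definition psi_v :: "(real \<times> real \<Rightarrow> real^3) \<Rightarrow> real \<Rightarrow> real \<Rightarrow> real^3" where
  "psi_v \<psi> u v = frechet_derivative \<psi> (at (u, v)) (0, 1)"

text \<open>Tangential projection of Rhat onto T Psi, in components w.r.t. the coordinates (u,v)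
  (covector components: pairing with the coordinate vectors psi_u, psi_v).\<close>
definition projT :: "(real \<times> real \<Rightarrow> real^3) \<Rightarrow> (real \<Rightarrow> real^3) \<Rightarrow> real \<Rightarrow> real \<Rightarrow> real \<Rightarrow> real \<times> real" where
  "projT \<psi> \<gamma> u v s = (Rhat \<psi> \<gamma> u v s \<bullet> psi_u \<psi> u v, Rhat \<psi> \<gamma> u v s \<bullet> psi_v \<psi> u v)"

definition gdot :: "(real \<Rightarrow> real^3) \<Rightarrow> real \<Rightarrow> real^3" where
  "gdot \<gamma> s = vector_derivative \<gamma> (at s)"

definition grad_Rg :: "(real \<times> real \<Rightarrow> real^3) \<Rightarrow> (real \<Rightarrow> real^3) \<Rightarrow> real \<Rightarrow> real \<Rightarrow> real \<Rightarrow> real \<times> real" where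
  "grad_Rg \<psi> \<gamma> u v s =
     (let g = (\<lambda>(a, b). Rhat \<psi> \<gamma> a b s \<bullet> gdot \<gamma> s)
      in (frechet_derivative g (at (u, v)) (1, 0), frechet_derivative g (at (u, v)) (0, 1)))"

definition ds_projT :: "(real \<times> real \<Rightarrow> real^3) \<Rightarrow> (real \<Rightarrow> real^3) \<Rightarrow> real \<Rightarrow> real \<Rightarrow> real \<Rightarrow> real \<times> real" where
  "ds_projT \<psi> \<gamma> u v s = vector_derivative (\<lambda>r. projT \<psi> \<gamma> u v r) (at s)"

definition Ydom :: "real \<Rightarrow> real \<Rightarrow> real \<Rightarrow> real \<Rightarrow> (real \<times> real) set" where
  "Ydom s1 s2 t1 t2 = {s1<..<s2} \<times> {t1<..<t2}"

definition Xdom :: "(real \<times> real) set \<Rightarrow> (real \<times> real \<Rightarrow> real^3) \<Rightarrow> (real \<Rightarrow> real^3) \<Rightarrow> real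
                    \<Rightarrow> real \<Rightarrow> real \<Rightarrow> real \<Rightarrow> real \<Rightarrow> (real \<times> real) set" where
  "Xdom U \<psi> \<gamma> c0 s1 s2 t1 t2 =
     {(u, v). (u, v) \<in> U \<and> (\<exists>s\<in>{s1<..<s2}. 2 / c0 * norm (\<psi> (u, v) - \<gamma> s) \<in> {t1<..<t2})}"

definition Lambda' :: "(real \<times> real) set \<Rightarrow> (real \<times> real \<Rightarrow> real^3) \<Rightarrow> (real \<Rightarrow> real^3) \<Rightarrow> real
                    \<Rightarrow> real \<Rightarrow> real \<Rightarrow> real \<Rightarrow> real
                    \<Rightarrow> ((real \<times> real \<times> real \<times> real) \<times> (real \<times> real \<times> real \<times> real)) set" where
  "Lambda' U \<psi> \<gamma> c0 s1 s2 t1 t2 =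
     {((s, t, \<sigma>, \<tau>), (u, v, \<xi>, \<eta>)).
        (s, t) \<in> Ydom s1 s2 t1 t2 \<and> (u, v) \<in> Xdom U \<psi> \<gamma> c0 s1 s2 t1 t2 \<and>
        t = 2 / c0 * norm (Rvec \<psi> \<gamma> u v s) \<and>
        \<sigma> = 2 * \<tau> / c0 * (Rhat \<psi> \<gamma> u v s \<bullet> gdot \<gamma> s) \<and>
        (\<xi>, \<eta>) = (2 * \<tau> / c0) *\<^sub>R projT \<psi> \<gamma> u v s}"

definition Sigma1 where
  "Sigma1 U \<psi> \<gamma> c0 s1 s2 t1 t2 =
     {((s, t, \<sigma>, \<tau>), (u, v, \<xi>, \<eta>)). parallel2 (projT \<psi> \<gamma> u v s) (grad_Rg \<psi> \<gamma> u v s)}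
     \<inter> Lambda' U \<psi> \<gamma> c0 s1 s2 t1 t2"

definition Sigma2 where
  "Sigma2 U \<psi> \<gamma> c0 s1 s2 t1 t2 =
     {((s, t, \<sigma>, \<tau>), (u, v, \<xi>, \<eta>)). parallel2 (projT \<psi> \<gamma> u v s) (ds_projT \<psi> \<gamma> u v s)}
     \<inter> Lambda' U \<psi> \<gamma> c0 s1 s2 t1 t2"

definition SigmaDeg where
  "SigmaDeg U \<psi> \<gamma> c0 s1 s2 t1 t2 = Sigma1 U \<psi> \<gamma> c0 s1 s2 t1 t2 \<union> Sigma2 U \<psi> \<gamma> c0 s1 s2 t1 t2"

definition TstarY0 :: "real \<Rightarrow> real \<Rightarrow> real \<Rightarrow> real \<Rightarrow> (real \<times> real \<times> real \<times> real) set" where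
  "TstarY0 s1 s2 t1 t2 = {(s, t, \<sigma>, \<tau>). (s, t) \<in> Ydom s1 s2 t1 t2 \<and> (\<sigma>, \<tau>) \<noteq> (0, 0)}"

definition TstarX0 where
  "TstarX0 U \<psi> \<gamma> c0 s1 s2 t1 t2 =
     {(u, v, \<xi>, \<eta>). (u, v) \<in> Xdom U \<psi> \<gamma> c0 s1 s2 t1 t2 \<and> (\<xi>, \<eta>) \<noteq> ((0::real), (0::real))}"

definition mirror_pts where
  "mirror_pts U \<psi> \<gamma> c0 s1 s2 t1 t2 p =
     {q \<in> TstarX0 U \<psi> \<gamma> c0 s1 s2 t1 t2. (p, q) \<in> Lambda' U \<psi> \<gamma> c0 s1 s2 t1 t2}"

definition Sigma_fib where
  "Sigma_fib U \<psi> \<gamma> c0 s1 s2 t1 t2 p =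
     {q \<in> TstarX0 U \<psi> \<gamma> c0 s1 s2 t1 t2. (p, q) \<in> SigmaDeg U \<psi> \<gamma> c0 s1 s2 t1 t2}"

end

theory Submission
  imports Defs
begin

lemma local_inj:
  fixes F :: "real \<times> real \<Rightarrow> real \<times> real"
  assumes d: "(F has_derivative L) (at x0)" and i: "inj L"
  shows "\<exists>d>0. \<forall>x. x \<noteq> x0 \<and> dist x x0 < d \<longrightarrow> F x \<noteq> F x0"
proof -
  have lin: "linear L" using d has_derivative_linear by blast
  obtain B where B: "B > 0" "\<And>x. B * norm x \<le> norm (L x)"
    using linear_inj_bounded_below_pos[OF lin i] by blast
  obtain d where d0: "d > 0" and dd: "\<And>y. norm (y - x0) < d \<Longrightarrow> norm (F y - F x0 - L (y - x0)) \<le> (B/2) * norm (y - x0)"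
    using d[unfolded has_derivative_at_alt] B(1) by (meson half_gt_zero)
  show ?thesis
  proof (intro exI[of _ d] conjI allI impI)
    fix x assume h: "x \<noteq> x0 \<and> dist x x0 < d"
    show "F x \<noteq> F x0"
    proof
      assume e: "F x = F x0"
      have "norm (L (x - x0)) \<le> (B/2) * norm (x - x0)"
        using dd[of x] h e by (simp add: dist_norm)
      moreover have "B * norm (x - x0) \<le> norm (L (x - x0))" by (rule B(2))
      moreover have "norm (x - x0) > 0" using h by simp
      moreover have "B/2 * norm (x - x0) < B * norm (x - x0)" using B(1) \<open>norm (x - x0) > 0\<close> by simp
      ultimately show False by linarith
    qed
  qed (rule d0)
qed

lemma inj_of_nonpar:
  fixes A B :: "real \<times> real \<Rightarrow> real"
  assumes lA: "linear A" and lB: "linear B"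
    and np: "\<not> parallel2 (A (1,0), A (0,1)) (B (1,0), B (0,1))"
  shows "inj (\<lambda>h. (A h, B h))"
proof -
  have rep: "C (x,y) = x * C (1,0) + y * C (0,1)" if lC: "linear C" for C :: "real \<times> real \<Rightarrow> real" and x y
  proof -
    have "C (x,y) = C (x *\<^sub>R (1,0) + y *\<^sub>R (0,1))" by simp
    also have "\<dots> = C (x *\<^sub>R (1,0)) + C (y *\<^sub>R (0,1))" by (rule linear_add[OF lC])
    also have "\<dots> = x *\<^sub>R C (1,0) + y *\<^sub>R C (0,1)" by (simp only: linear_scale[OF lC])
    finally show ?thesis by simp
  qed
  have zero: "h = 0" if h0: "A h = 0" "B h = 0" for h
  proof -
    obtain x y where hxy: "h = (x,y)" by (cases h)
    define a1 where "a1 = A(1,0)"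
    define a2 where "a2 = A(0,1)"
    define b1 where "b1 = B(1,0)"
    define b2 where "b2 = B(0,1)"
    have e1: "x*a1 + y*a2 = 0" "x*b1 + y*b2 = 0"
      using h0 hxy rep[OF lA, of x y] rep[OF lB, of x y] a1_def a2_def b1_def b2_def by simp_all
    have k1: "x*(a1*b2-a2*b1) = b2*(x*a1+y*a2) - a2*(x*b1+y*b2)" by (simp add: algebra_simps)
    have k2: "y*(a1*b2-a2*b1) = a1*(x*b1+y*b2) - b1*(x*a1+y*a2)" by (simp add: algebra_simps)
    have "a1*b2 - a2*b1 = 0 \<or> (x = 0 \<and> y = 0)"
      using k1 k2 e1 by auto
    moreover have "a1*b2 - a2*b1 \<noteq> 0"
    proof
      assume det: "a1*b2 - a2*b1 = 0"
      have "parallel2 (a1,a2) (b1,b2)"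
      proof (cases "(b1,b2) = (0,0)")
        case True then show ?thesis unfolding parallel2_def by (intro exI[of _ 0] exI[of _ 1]) (auto simp: zero_prod_def)
      next
        case False
        have ne: "b1*b1+b2*b2 \<noteq> 0" using False sum_squares_eq_zero_iff[of b1 b2] by auto
        have c1: "(b1*b1+b2*b2)*a1 + (-(a1*b1+a2*b2))*b1 = b2*(a1*b2 - a2*b1)" by (simp add: algebra_simps)
        have c2: "(b1*b1+b2*b2)*a2 + (-(a1*b1+a2*b2))*b2 = -b1*(a1*b2 - a2*b1)" by (simp add: algebra_simps)
        show ?thesis unfolding parallel2_def
          apply (rule exI[of _ "b1*b1+b2*b2"], rule exI[of _ "-(a1*b1+a2*b2)"])
          using ne c1 c2 det by (auto simp: zero_prod_def)
      qed
      then show False using np a1_def a2_def b1_def b2_def by simp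
    qed
    ultimately show "h = 0" using hxy by (simp add: zero_prod_def)
  qed
  show ?thesis
  proof (rule injI)
    fix h h' assume "(A h, B h) = (A h', B h')"
    then have "A (h - h') = 0" "B (h - h') = 0"
      by (simp_all add: linear_diff[OF lA] linear_diff[OF lB])
    then have "h - h' = 0" by (rule zero)
    then show "h = h'" by simp
  qed
qed

lemma dist_uv_le:
  fixes a c b d :: real and z w :: "real \<times> real"
  shows "dist (a,b) (c,d) \<le> dist (a,b,z) (c,d,w)"
proof -
  have "dist b d \<le> dist (b,z) (d,w)" using dist_fst_le[of "(b,z)" "(d,w)"] by simp
  then have "(dist b d)^2 \<le> (dist (b,z) (d,w))^2" by (simp add: power_mono)
  then have "sqrt ((dist a c)^2 + (dist b d)^2) \<le> sqrt ((dist a c)^2 + (dist (b,z) (d,w))^2)"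
    by (intro real_sqrt_le_mono) linarith
  then show ?thesis by (simp only: dist_Pair_Pair[of a b c d] dist_Pair_Pair[of a "(b,z)" c "(d,w)"])
qed

theorem proposition3:
  fixes \<gamma> :: "real \<Rightarrow> real^3" and \<psi> :: "real \<times> real \<Rightarrow> real^3"
    and U :: "(real \<times> real) set"
    and c0 s1 s2 t1 t2 :: real
    and p :: "real \<times> real \<times> real \<times> real"
  assumes gamma_smooth: "smooth_on UNIV \<gamma>"
    and gamma_unit: "\<And>s. norm (vector_derivative \<gamma> (at s)) = 1"
    and gamma_embedded: "\<exists>g. homeomorphism UNIV (range \<gamma>) \<gamma> g"
    and psi_smooth: "smooth_on U \<psi>"
    and psi_immersion: "\<And>x. x \<in> U \<Longrightarrow> inj (frechet_derivative \<psi> (at x))"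
    and psi_embedded: "\<exists>g. homeomorphism U (\<psi> ` U) \<psi> g"
    and dist_pos: "setdist (\<psi> ` U) (range \<gamma>) > 0"
    and c0_pos: "c0 > 0"
    and p_in: "p \<in> TstarY0 s1 s2 t1 t2"
  shows "\<forall>q \<in> mirror_pts U \<psi> \<gamma> c0 s1 s2 t1 t2 p - Sigma_fib U \<psi> \<gamma> c0 s1 s2 t1 t2 p.
           \<not> q islimpt (mirror_pts U \<psi> \<gamma> c0 s1 s2 t1 t2 p - Sigma_fib U \<psi> \<gamma> c0 s1 s2 t1 t2 p)"
proof
  let ?S = "mirror_pts U \<psi> \<gamma> c0 s1 s2 t1 t2 p - Sigma_fib U \<psi> \<gamma> c0 s1 s2 t1 t2 p"
  fix q assume qS: "q \<in> ?S"
  obtain s t \<sigma> \<tau> where p: "p = (s,t,\<sigma>,\<tau>)" by (cases p) auto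
  obtain u v \<xi> \<eta> where q: "q = (u,v,\<xi>,\<eta>)" by (cases q) auto
  have qT: "q \<in> TstarX0 U \<psi> \<gamma> c0 s1 s2 t1 t2" and qL: "(p,q) \<in> Lambda' U \<psi> \<gamma> c0 s1 s2 t1 t2"
    and qN: "(p,q) \<notin> SigmaDeg U \<psi> \<gamma> c0 s1 s2 t1 t2"
    using qS unfolding mirror_pts_def Sigma_fib_def by auto
  have np: "\<not> parallel2 (projT \<psi> \<gamma> u v s) (grad_Rg \<psi> \<gamma> u v s)"
    using qN qL unfolding SigmaDeg_def Sigma1_def p q by auto
  have uvU: "(u,v) \<in> U" using qT unfolding TstarX0_def Xdom_def q by auto
  have xine: "(\<xi>,\<eta>) \<noteq> (0,0)" using qT unfolding TstarX0_def q by auto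
  have qL': "t = 2 / c0 * norm (Rvec \<psi> \<gamma> u v s)"
    "\<sigma> = 2 * \<tau> / c0 * (Rhat \<psi> \<gamma> u v s \<bullet> gdot \<gamma> s)"
    "(\<xi>, \<eta>) = (2 * \<tau> / c0) *\<^sub>R projT \<psi> \<gamma> u v s"
    using qL unfolding Lambda'_def p q by auto
  have tau0: "\<tau> \<noteq> 0" using xine qL'(3) by (auto simp: zero_prod_def)
  define x0 where "x0 = (u,v)"
  have psid: "\<psi> differentiable (at x0)"
    using psi_smooth uvU unfolding smooth_on_def x0_def
    by (metis iter_dderiv.simps(1))
  define D where "D = frechet_derivative \<psi> (at x0)"
  have psiD: "(\<psi> has_derivative D) (at x0)" using psid frechet_derivative_works D_def by blast
  define r where "r = (\<lambda>x. \<psi> x - \<gamma> s)"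
  have r0: "r x0 \<noteq> 0"
  proof
    assume "r x0 = 0"
    then have "dist (\<psi> x0) (\<gamma> s) = 0" unfolding r_def by simp
    moreover have "setdist (\<psi> ` U) (range \<gamma>) \<le> dist (\<psi> x0) (\<gamma> s)"
      using uvU x0_def by (intro setdist_le_dist) auto
    ultimately show False using dist_pos by simp
  qed
  have rD: "(r has_derivative D) (at x0)" unfolding r_def
    using has_derivative_diff[OF psiD has_derivative_const[of "\<gamma> s"]] by simp
  define F1 where "F1 = (\<lambda>x. norm (r x))"
  define DF1 where "DF1 = (\<lambda>h. D h \<bullet> sgn (r x0))"
  have F1D: "(F1 has_derivative DF1) (at x0)" unfolding F1_def DF1_def
    using has_derivative_compose[OF rD has_derivative_norm[OF r0]] by simp
  define F2 where "F2 = (\<lambda>(a, b). Rhat \<psi> \<gamma> a b s \<bullet> gdot \<gamma> s)"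
  have F2eq: "F2 = (\<lambda>x. ((1 / norm (r x)) *\<^sub>R r x) \<bullet> gdot \<gamma> s)"
    unfolding F2_def Rhat_def Rvec_def r_def by auto
  have rdiff: "r differentiable (at x0)" using rD differentiableI by blast
  have ndiff: "(\<lambda>x. norm (r x)) differentiable (at x0)"
    using F1D F1_def differentiableI by blast
  have F2diff: "F2 differentiable (at x0)" unfolding F2eq
    by (intro differentiable_inner differentiable_scaleR differentiable_divide rdiff ndiff
        differentiable_const) (use r0 in auto)
  define DF2 where "DF2 = frechet_derivative F2 (at x0)"
  have F2D: "(F2 has_derivative DF2) (at x0)" using F2diff frechet_derivative_works DF2_def by blast
  define F where "F = (\<lambda>x. (F1 x, F2 x))"
  have FD: "(F has_derivative (\<lambda>h. (DF1 h, DF2 h))) (at x0)"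
    unfolding F_def using has_derivative_Pair[OF F1D F2D] .
  have linD: "linear D" using psiD has_derivative_linear by blast
  have lin1: "linear DF1" using F1D has_derivative_linear by blast
  have lin2: "linear DF2" using F2D has_derivative_linear by blast
  have pr: "projT \<psi> \<gamma> u v s = (DF1 (1,0), DF1 (0,1))"
    unfolding projT_def DF1_def Rhat_def psi_u_def psi_v_def D_def x0_def r_def Rvec_def
    by (simp add: sgn_div_norm inner_commute divide_inverse)
  have gr: "grad_Rg \<psi> \<gamma> u v s = (DF2 (1,0), DF2 (0,1))"
    unfolding grad_Rg_def DF2_def F2_def x0_def Let_def by (rule refl)
  have injL: "inj (\<lambda>h. (DF1 h, DF2 h))"
    using inj_of_nonpar[OF lin1 lin2] np pr gr by simp
  obtain d where d0: "d > 0" and dF: "\<And>x. x \<noteq> x0 \<and> dist x x0 < d \<Longrightarrow> F x \<noteq> F x0"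
    using local_inj[OF FD injL] by blast
  show "\<not> q islimpt ?S"
  proof
    assume "q islimpt ?S"
    then obtain q' where q'S: "q' \<in> ?S" and q'ne: "q' \<noteq> q" and q'd: "dist q' q < d"
      using d0 unfolding islimpt_approachable by blast
    obtain u' v' \<xi>' \<eta>' where q': "q' = (u',v',\<xi>',\<eta>')" by (cases q') auto
    have q'L: "(p,q') \<in> Lambda' U \<psi> \<gamma> c0 s1 s2 t1 t2"
      using q'S unfolding mirror_pts_def by auto
    have q'L': "t = 2 / c0 * norm (Rvec \<psi> \<gamma> u' v' s)"
      "\<sigma> = 2 * \<tau> / c0 * (Rhat \<psi> \<gamma> u' v' s \<bullet> gdot \<gamma> s)"
      "(\<xi>', \<eta>') = (2 * \<tau> / c0) *\<^sub>R projT \<psi> \<gamma> u' v' s"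
      using q'L unfolding Lambda'_def p q' by auto
    have dd: "dist (u',v') x0 < d"
      using dist_uv_le[of u' v' u v "(\<xi>',\<eta>')" "(\<xi>,\<eta>)"] q'd unfolding q q' x0_def by simp
    have e1: "norm (Rvec \<psi> \<gamma> u' v' s) = norm (Rvec \<psi> \<gamma> u v s)"
      using q'L'(1) qL'(1) c0_pos by simp
    have e2: "Rhat \<psi> \<gamma> u' v' s \<bullet> gdot \<gamma> s = Rhat \<psi> \<gamma> u v s \<bullet> gdot \<gamma> s"
      using q'L'(2) qL'(2) c0_pos tau0 by simp
    have "F (u',v') = F x0"
      unfolding F_def F1_def F2_def x0_def using e1 e2 by (simp add: r_def Rvec_def)
    then have "(u',v') = x0" using dF dd by blast
    then have "q' = q" using q'L'(3) qL'(3) unfolding q q' x0_def by simp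
    then show False using q'ne by simp
  qed
qed

end
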